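(* Let $\beta>0$ and let $N$ be a nonnegative integer random variable with $P(N\ge n)=1-e^{-\beta/n}$ for all integers $n\ge1$. Consider the one-dimensional oriented percolation with random range with $p=1$ (every bond of $G_{\mathbf N}$ is open). Then $\theta(1,0)=P(0\to\infty)=0$ if $\beta<1$, and $\theta(1,0)>0$ if $\beta>1$.
   Context: One-dimensional percolation with random range (equivalently, the APRR model with $q=0$, restricted to the line through the origin in direction $\vec e_1$). Let $\mathbf N=(N_i)_{i\in\mathbb{Z}}$ be i.i.d. with law $N$, and let $G_{\mathbf N}$ be the oriented graph on $\mathbb{Z}$ with bonds $\{(i,i+n): i\in\mathbb{Z},\ 1\le n\le N_i\}$. Given $p\in[0,1]$, each bond of $G_{\mathbf N}$ is open independently with probability $p$. $(0\to\infty)$ is the event that $0$ is connected by oriented open paths to infinitely many vertices, and $\theta(p,0)=P(0\to\infty)$. *)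

theory Defs
  imports "HOL-Probability.Probability"
begin

text \<open>Oriented graph G_N on the integers: bonds (i, i+n) with 1 <= n <= Nv i.\<close>
definition open_bond :: "(int \<Rightarrow> nat) \<Rightarrow> (int \<Rightarrow> nat \<Rightarrow> bool) \<Rightarrow> int \<Rightarrow> int \<Rightarrow> bool" where
  "open_bond Nv opn i j \<longleftrightarrow> i < j \<and> j - i \<le> int (Nv i) \<and> opn i (nat (j - i))"

definition connected_to :: "(int \<Rightarrow> nat) \<Rightarrow> (int \<Rightarrow> nat \<Rightarrow> bool) \<Rightarrow> int \<Rightarrow> int \<Rightarrow> bool" where
  "connected_to Nv opn i j \<longleftrightarrow> (open_bond Nv opn)\<^sup>*\<^sup>* i j"

definition percolates :: "(int \<Rightarrow> nat) \<Rightarrow> (int \<Rightarrow> nat \<Rightarrow> bool) \<Rightarrow> bool" where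
  "percolates Nv opn \<longleftrightarrow> infinite {j. connected_to Nv opn 0 j}"

end

theory Submission
  imports Defs
begin


lemma PiM_count_all_sets:
  fixes K :: "'i set"
  assumes "finite K" "A \<subseteq> space (PiM K (\<lambda>_. count_space (UNIV::'b::countable set)))"
  shows "A \<in> sets (PiM K (\<lambda>_. count_space (UNIV::'b set)))"
proof (rule sets.countable)
  fix a assume a: "a \<in> A"
  then have aS: "a \<in> PiE K (\<lambda>_. UNIV)" using assms(2) by (auto simp: space_PiM)
  have "{a} = PiE K (\<lambda>i. {a i})"
    using aS by (auto simp: PiE_def extensional_def Pi_def fun_eq_iff) (metis)
  then show "{a} \<in> sets (PiM K (\<lambda>_. count_space (UNIV::'b set)))"
    using assms(1) by (simp add: sets_PiM_I_finite)
next
  have "countable (PiE K (\<lambda>_. (UNIV::'b set)))" using assms(1) by (intro countable_PiE) auto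
  then show "countable A" using assms(2) by (auto simp: space_PiM intro: countable_subset)
qed

lemma sum_inv_shift: "(\<Sum>i\<in>{k..<k+d}. 1 / real (k + d - i)) = harm d"
proof (induction d arbitrary: k)
  case 0 then show ?case by (simp add: harm_def)
next
  case (Suc d)
  have "{k..<k + Suc d} = insert k {Suc k..<Suc k + d}" by auto
  then have "(\<Sum>i\<in>{k..<k+Suc d}. 1 / real (k + Suc d - i)) = 1 / real (Suc d) + (\<Sum>i\<in>{Suc k..<Suc k+d}. 1 / real (Suc k + d - i))"
    by simp
  also have "\<dots> = harm (Suc d)" using Suc[of "Suc k"] by (simp add: harm_Suc field_simps)
  finally show ?case .
qed

lemma swap_tri: "(\<Sum>n\<in>{1..(N::nat)}. \<Sum>k\<in>{1..n}. g k n) = (\<Sum>k\<in>{1..N}. \<Sum>n\<in>{k..N}. (g k n :: real))"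
proof (induction N)
  case 0 then show ?case by simp
next
  case (Suc N)
  have "(\<Sum>k\<in>{1..Suc N}. \<Sum>n\<in>{k..Suc N}. g k n) = (\<Sum>k\<in>{1..N}. \<Sum>n\<in>{k..Suc N}. g k n) + g (Suc N) (Suc N)"
    by simp
  also have "(\<Sum>k\<in>{1..N}. \<Sum>n\<in>{k..Suc N}. g k n) = (\<Sum>k\<in>{1..N}. (\<Sum>n\<in>{k..N}. g k n) + g k (Suc N))"
    by (rule sum.cong) auto
  finally show ?case using Suc by (simp add: sum.distrib)
qed

lemma shift_sum: "(k::nat) \<le> N \<Longrightarrow> (\<Sum>n\<in>{k..N}. (a (n - k)::real)) = (\<Sum>m\<le>N-k. a m)"
proof -
  assume "k \<le> N"
  have "(\<Sum>m\<le>N-k. a m) = (\<Sum>n\<in>(\<lambda>m. m + k) ` {..N-k}. a (n - k))"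
    by (subst sum.reindex) (auto simp: inj_on_def)
  also have "(\<lambda>m. m + k) ` {..N-k} = {k..N}" using \<open>k \<le> N\<close>
    proof (intro equalityI subsetI)
    fix x assume "x \<in> {k..N}" then show "x \<in> (\<lambda>m. m + k) ` {..N-k}"
      by (intro image_eqI[of _ _ "x - k"]) auto
  qed auto
  finally show ?thesis by simp
qed




locale perc_setup = prob_space M for M :: "'a measure" +
  fixes N :: "int \<Rightarrow> 'a \<Rightarrow> nat" and \<beta> :: real
  assumes beta_pos: "\<beta> > 0"
    and ind: "indep_vars (\<lambda>_. count_space UNIV) N UNIV"
    and dist: "\<And>i n. n \<ge> 1 \<Longrightarrow> prob {\<omega> \<in> space M. N i \<omega> \<ge> n} = 1 - exp (- \<beta> / real n)"
begin

definition "U n = {\<omega>\<in>space M. \<forall>i<n. N (int i) \<omega> + i < n}"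
definition "V k n = {\<omega>\<in>space M. \<forall>i. k \<le> i \<and> i < n \<longrightarrow> N (int i) \<omega> + i < n}"
definition "Q n = {\<omega>\<in>space M. \<forall>j\<in>{1..n}. \<omega> \<notin> U j}"
definition "F k = {\<omega>\<in>U k. \<forall>j\<in>{1..<k}. \<omega> \<notin> U j}"
definition "a m = exp (- \<beta> * harm m)"

lemma rv[measurable]: "N i \<in> measurable M (count_space UNIV)"
  using ind unfolding indep_vars_def by auto

lemma U_ev[measurable]: "U n \<in> events" unfolding U_def by measurable
lemma V_ev[measurable]: "V k n \<in> events" unfolding V_def by measurable
lemma Q_ev[measurable]: "Q n \<in> events" unfolding Q_def by measurable
lemma F_ev[measurable]: "F k \<in> events" unfolding F_def by measurable

lemma prob_le: "prob {\<omega>\<in>space M. N i \<omega> \<le> j} = exp (- \<beta> / (real j + 1))"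
proof -
  have "{\<omega>\<in>space M. N i \<omega> \<le> j} = space M - {\<omega>\<in>space M. N i \<omega> \<ge> Suc j}" by auto
  then have "prob {\<omega>\<in>space M. N i \<omega> \<le> j} = 1 - prob {\<omega>\<in>space M. N i \<omega> \<ge> Suc j}"
    by (simp add: prob_compl)
  also have "\<dots> = exp (- \<beta> / (real j + 1))" using dist[of "Suc j" i] by (simp add: add.commute)
  finally show ?thesis .
qed

lemma prob_V: assumes "k \<le> n" shows "prob (V k n) = a (n - k)"
proof (cases "k = n")
  case True
  then have "V k n = space M" by (auto simp: V_def)
  then show ?thesis using True by (simp add: a_def harm_def prob_space)
next
  case False
  then have kn: "k < n" using assms by simp
  let ?I = "int ` {k..<n}"
  let ?A = "\<lambda>j. {x. x + nat j < n}"
  have "V k n = (\<Inter>j\<in>?I. N j -` ?A j \<inter> space M)"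
    using kn by (auto simp: V_def)
  then have "prob (V k n) = prob (\<Inter>j\<in>?I. N j -` ?A j \<inter> space M)" by simp
  also have "\<dots> = (\<Prod>j\<in>?I. prob (N j -` ?A j \<inter> space M))"
    by (rule indep_varsD_finite[OF indep_vars_subset[OF ind]]) (use kn in auto)
  also have "\<dots> = (\<Prod>i\<in>{k..<n}. prob (N (int i) -` ?A (int i) \<inter> space M))"
    by (subst prod.reindex) (auto simp: inj_on_def)
  also have "\<dots> = (\<Prod>i\<in>{k..<n}. exp (- \<beta> * (1 / real (n - i))))"
  proof (rule prod.cong)
    fix i assume i: "i \<in> {k..<n}"
    have "N (int i) -` ?A (int i) \<inter> space M = {\<omega>\<in>space M. N (int i) \<omega> \<le> n - 1 - i}" using i by auto
    then show "prob (N (int i) -` ?A (int i) \<inter> space M) = exp (- \<beta> * (1 / real (n - i)))"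
      using i by (simp add: prob_le of_nat_diff)
  qed simp
  also have "\<dots> = exp (\<Sum>i\<in>{k..<n}. - \<beta> * (1 / real (n - i)))"
    by (simp add: exp_sum)
  also have "(\<Sum>i\<in>{k..<n}. - \<beta> * (1 / real (n - i))) = - \<beta> * harm (n - k)"
  proof -
    have "(\<Sum>i\<in>{k..<n}. - \<beta> * (1 / real (n - i))) = - \<beta> * (\<Sum>i\<in>{k..<n}. 1 / real (n - i))"
      by (rule sum_distrib_left[symmetric])
    moreover have "(\<Sum>i\<in>{k..<n}. 1 / real (n - i)) = harm (n - k)"
      using sum_inv_shift[of k "n - k"] kn by simp
    ultimately show ?thesis by simp
  qed
  finally show ?thesis by (simp add: a_def)
qed

lemma prob_U: "prob (U n) = a n"
proof -
  have "U n = V 0 n" by (auto simp: U_def V_def)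
  then show ?thesis using prob_V[of 0 n] by simp
qed

lemma indep_FV:
  assumes "k \<le> n"
  shows "prob (F k \<inter> V k n) = prob (F k) * prob (V k n)"
proof -
  define K where "K = (\<lambda>b. if b then int ` {..<k} else int ` {k..<n})"
  define R where "R = (\<lambda>b \<omega>. restrict (\<lambda>i. N i \<omega>) (K b))"
  have indR: "indep_vars (\<lambda>b. PiM (K b) (\<lambda>_. count_space UNIV)) R UNIV"
    unfolding R_def by (rule indep_vars_restrict[OF ind]) (auto simp: K_def disjoint_family_on_def)
  define AF where "AF = {x \<in> space (PiM (K True) (\<lambda>_. count_space (UNIV::nat set))).
       (\<forall>i<k. x (int i) + i < k) \<and> (\<forall>j\<in>{1..<k}. \<not>(\<forall>i<j. x (int i) + i < j))}"
  define AV where "AV = {x \<in> space (PiM (K False) (\<lambda>_. count_space (UNIV::nat set))).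
       \<forall>i. k \<le> i \<and> i < n \<longrightarrow> x (int i) + i < n}"
  define A where "A = (\<lambda>b. if b then AF else AV)"
  have finK: "finite (K b)" for b by (simp add: K_def)
  have A_sets: "A b \<in> sets (PiM (K b) (\<lambda>_. count_space UNIV))" for b
  proof (cases b)
    case True
    have "AF \<subseteq> space (PiM (K True) (\<lambda>_. count_space UNIV))" unfolding AF_def by (rule Collect_subset)
    then show ?thesis using True finK[of True] unfolding A_def by (simp add: PiM_count_all_sets)
  next
    case False
    have "AV \<subseteq> space (PiM (K False) (\<lambda>_. count_space UNIV))" unfolding AV_def by (rule Collect_subset)
    then show ?thesis using False finK[of False] unfolding A_def by (simp add: PiM_count_all_sets)
  qed
  have Rsp: "R b \<omega> \<in> space (PiM (K b) (\<lambda>_. count_space UNIV))" for b \<omega>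
    by (simp add: R_def space_PiM)
  have RT: "i < k \<Longrightarrow> R True \<omega> (int i) = N (int i) \<omega>" for i \<omega>
    by (simp add: R_def K_def)
  have RF: "k \<le> i \<Longrightarrow> i < n \<Longrightarrow> R False \<omega> (int i) = N (int i) \<omega>" for i \<omega>
    by (simp add: R_def K_def)
  have eqF: "R True -` A True \<inter> space M = F k"
  proof -
    have "(\<forall>j\<in>{1..<k}. \<not>(\<forall>i<j. R True \<omega> (int i) + i < j)) \<longleftrightarrow> (\<forall>j\<in>{1..<k}. \<not>(\<forall>i<j. N (int i) \<omega> + i < j))" for \<omega>
    proof -
      have "(\<forall>i<j. R True \<omega> (int i) + i < j) \<longleftrightarrow> (\<forall>i<j. N (int i) \<omega> + i < j)" if "j < k" for j
        using that RT by auto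
      then show ?thesis by auto
    qed
    moreover have "(\<forall>i<k. R True \<omega> (int i) + i < k) \<longleftrightarrow> (\<forall>i<k. N (int i) \<omega> + i < k)" for \<omega>
      using RT by auto
    ultimately show ?thesis using Rsp[of True]
      by (auto simp: A_def AF_def F_def U_def)
  qed
  have eqV: "R False -` A False \<inter> space M = V k n"
  proof -
    have "(\<forall>i. k \<le> i \<and> i < n \<longrightarrow> R False \<omega> (int i) + i < n) \<longleftrightarrow> (\<forall>i. k \<le> i \<and> i < n \<longrightarrow> N (int i) \<omega> + i < n)" for \<omega>
      using RF by auto
    then show ?thesis using Rsp[of False]
      by (auto simp: A_def AV_def V_def)
  qed
  have "prob (\<Inter>b\<in>UNIV. R b -` A b \<inter> space M) = (\<Prod>b\<in>UNIV. prob (R b -` A b \<inter> space M))"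
    by (rule indep_varsD_finite[OF indR]) (use A_sets in auto)
  moreover have "(\<Inter>b\<in>UNIV. R b -` A b \<inter> space M) = F k \<inter> V k n"
    using eqF eqV by (auto simp: UNIV_bool)
  ultimately show ?thesis using eqF eqV by (simp add: UNIV_bool)
qed

lemma U_decomp:
  assumes "1 \<le> n"
  shows "U n = (\<Union>k\<in>{1..n}. F k \<inter> V k n)"
proof (intro equalityI subsetI)
  fix \<omega> assume w: "\<omega> \<in> U n"
  define k where "k = (LEAST j. 1 \<le> j \<and> \<omega> \<in> U j)"
  have P: "1 \<le> k \<and> \<omega> \<in> U k" unfolding k_def by (rule LeastI[of _ n]) (use w assms in auto)
  have kn: "k \<le> n" unfolding k_def by (rule Least_le) (use w assms in auto)
  have notU: "\<omega> \<notin> U j" if "j \<in> {1..<k}" for j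
    using not_less_Least[of j "\<lambda>j. 1 \<le> j \<and> \<omega> \<in> U j"] that unfolding k_def[symmetric] by auto
  have "\<omega> \<in> F k" using P notU by (auto simp: F_def)
  moreover have "\<omega> \<in> V k n" using w by (auto simp: U_def V_def)
  ultimately show "\<omega> \<in> (\<Union>k\<in>{1..n}. F k \<inter> V k n)" using P kn by auto
next
  fix \<omega> assume "\<omega> \<in> (\<Union>k\<in>{1..n}. F k \<inter> V k n)"
  then obtain k where k: "k \<in> {1..n}" "\<omega> \<in> F k" "\<omega> \<in> V k n" by auto
  show "\<omega> \<in> U n"
    unfolding U_def
  proof (intro CollectI conjI allI impI)
    show "\<omega> \<in> space M" using k by (auto simp: V_def)
    fix i assume "i < n"
    show "N (int i) \<omega> + i < n"
    proof (cases "i < k")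
      case True then show ?thesis using k by (auto simp: F_def U_def)
    next
      case False then show ?thesis using k \<open>i < n\<close> by (auto simp: V_def)
    qed
  qed
qed

lemma F_disj: "disjoint_family_on F {1..n}"
proof (unfold disjoint_family_on_def, intro ballI impI)
  fix k1 k2 :: nat assume "k1 \<in> {1..n}" "k2 \<in> {1..n}" "k1 \<noteq> k2"
  show "F k1 \<inter> F k2 = {}"
  proof (cases "k1 < k2")
    case True then show ?thesis using \<open>k1 \<in> {1..n}\<close> by (auto simp: F_def)
  next
    case False then have "k2 < k1" using \<open>k1 \<noteq> k2\<close> by simp
    then show ?thesis using \<open>k2 \<in> {1..n}\<close> by (auto simp: F_def)
  qed
qed

lemma renewal:
  assumes "1 \<le> n"
  shows "a n = (\<Sum>k\<in>{1..n}. prob (F k) * a (n - k))"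
proof -
  have "a n = prob (\<Union>k\<in>{1..n}. F k \<inter> V k n)" using prob_U[of n] U_decomp[OF assms] by simp
  also have "\<dots> = (\<Sum>k\<in>{1..n}. prob (F k \<inter> V k n))"
    by (rule finite_measure_finite_Union) (use F_disj in \<open>auto simp: disjoint_family_on_def\<close>)
  also have "\<dots> = (\<Sum>k\<in>{1..n}. prob (F k) * a (n - k))"
    by (rule sum.cong) (auto simp: indep_FV prob_V)
  finally show ?thesis .
qed

lemma sumF: "(\<Sum>k\<in>{1..n}. prob (F k)) = 1 - prob (Q n)"
proof -
  have eq: "(\<Union>k\<in>{1..n}. F k) = space M - Q n"
  proof (intro equalityI subsetI)
    fix \<omega> assume "\<omega> \<in> (\<Union>k\<in>{1..n}. F k)"
    then show "\<omega> \<in> space M - Q n" by (auto simp: F_def Q_def U_def)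
  next
    fix \<omega> assume w: "\<omega> \<in> space M - Q n"
    then obtain j where j: "j \<in> {1..n}" "\<omega> \<in> U j" by (auto simp: Q_def)
    define k where "k = (LEAST j. 1 \<le> j \<and> \<omega> \<in> U j)"
    have P: "1 \<le> k \<and> \<omega> \<in> U k" unfolding k_def by (rule LeastI[of _ j]) (use j in auto)
    have kn: "k \<le> j" unfolding k_def by (rule Least_le) (use j in auto)
    have notU: "\<omega> \<notin> U i" if "i \<in> {1..<k}" for i
      using not_less_Least[of i "\<lambda>j. 1 \<le> j \<and> \<omega> \<in> U j"] that unfolding k_def[symmetric] by auto
    have "\<omega> \<in> F k" using P notU by (auto simp: F_def)
    then show "\<omega> \<in> (\<Union>k\<in>{1..n}. F k)" using P kn j by auto
  qed
  have "(\<Sum>k\<in>{1..n}. prob (F k)) = prob (\<Union>k\<in>{1..n}. F k)"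
    by (rule finite_measure_finite_Union[symmetric]) (use F_disj in auto)
  also have "\<dots> = 1 - prob (Q n)" unfolding eq by (rule prob_compl) simp
  finally show ?thesis .
qed

lemma perc_iff:
  assumes "\<omega> \<in> space M"
  shows "percolates (\<lambda>i. N i \<omega>) (\<lambda>_ _. True) \<longleftrightarrow> (\<forall>n. \<omega> \<in> Q n)"
proof
  assume perc: "percolates (\<lambda>i. N i \<omega>) (\<lambda>_ _. True)"
  show "\<forall>n. \<omega> \<in> Q n"
  proof (rule ccontr)
    assume "\<not> (\<forall>n. \<omega> \<in> Q n)"
    then obtain n where n: "1 \<le> n" "\<omega> \<in> U n" using assms by (auto simp: Q_def)
    have "0 \<le> j \<and> j < int n" if "connected_to (\<lambda>i. N i \<omega>) (\<lambda>_ _. True) 0 j" for j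
      using that unfolding connected_to_def
    proof (induction rule: rtranclp_induct)
      case base then show ?case using n by simp
    next
      case (step i j)
      then have "0 \<le> i" "i < int n" "i < j" "j - i \<le> int (N i \<omega>)" by (auto simp: open_bond_def)
      moreover have "N (int (nat i)) \<omega> + nat i < n" using n \<open>0 \<le> i\<close> \<open>i < int n\<close> unfolding U_def by (smt (verit) mem_Collect_eq nat_less_iff)
      ultimately show ?case by simp
    qed
    then have "{j. connected_to (\<lambda>i. N i \<omega>) (\<lambda>_ _. True) 0 j} \<subseteq> {0..<int n}" by auto
    then show False using perc unfolding percolates_def by (meson finite_atLeastLessThan_int finite_subset)
  qed
next
  assume allQ: "\<forall>n. \<omega> \<in> Q n"
  have "connected_to (\<lambda>i. N i \<omega>) (\<lambda>_ _. True) 0 (int m)" for m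
  proof (induction m rule: less_induct)
    case (less m)
    show ?case
    proof (cases "m = 0")
      case True then show ?thesis by (simp add: connected_to_def)
    next
      case False
      then have "\<omega> \<notin> U m" using allQ[rule_format, of m] by (auto simp: Q_def)
      then obtain i where i: "i < m" "\<not> N (int i) \<omega> + i < m" using assms by (auto simp: U_def)
      have "connected_to (\<lambda>i. N i \<omega>) (\<lambda>_ _. True) 0 (int i)" using less i by simp
      moreover have "open_bond (\<lambda>i. N i \<omega>) (\<lambda>_ _. True) (int i) (int m)"
        using i by (auto simp: open_bond_def)
      ultimately show ?thesis unfolding connected_to_def by (rule rtranclp.rtrancl_into_rtrancl)
    qed
  qed
  then have "range int \<subseteq> {j. connected_to (\<lambda>i. N i \<omega>) (\<lambda>_ _. True) 0 j}" by auto
  moreover have "infinite (range (int :: nat \<Rightarrow> int))" by (simp add: finite_image_iff inj_on_def)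
  ultimately show "percolates (\<lambda>i. N i \<omega>) (\<lambda>_ _. True)" unfolding percolates_def
    using finite_subset by blast
qed

end



context perc_setup begin

definition "S L = (\<Sum>m\<le>L. a m)"

lemma a_pos: "a m > 0" by (simp add: a_def)
lemma a0: "a 0 = 1" by (simp add: a_def harm_def)

lemma S_split: "S L = 1 + (\<Sum>n\<in>{1..L}. a n)"
proof -
  have "{..L} = insert 0 {1..L}" by auto
  then show ?thesis by (simp add: S_def a0)
qed

lemma S_mono: "L \<le> L' \<Longrightarrow> S L \<le> S L'"
  unfolding S_def by (rule sum_mono2) (auto intro: less_imp_le[OF a_pos])

lemma S_pos: "S L \<ge> 1" using S_split[of L] a_pos by (simp add: sum_nonneg less_imp_le)

lemma S_nonneg: "S L \<ge> 0" using S_pos[of L] by linarith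

lemma conv: "(\<Sum>n\<in>{1..L}. a n) = (\<Sum>k\<in>{1..L}. prob (F k) * S (L - k))"
proof -
  have "(\<Sum>n\<in>{1..L}. a n) = (\<Sum>n\<in>{1..L}. \<Sum>k\<in>{1..n}. prob (F k) * a (n - k))"
    by (intro sum.cong refl renewal) auto
  also have "\<dots> = (\<Sum>k\<in>{1..L}. \<Sum>n\<in>{k..L}. prob (F k) * a (n - k))"
    by (rule swap_tri)
  also have "\<dots> = (\<Sum>k\<in>{1..L}. prob (F k) * S (L - k))"
    by (rule sum.cong) (auto simp: sum_distrib_left[symmetric] shift_sum S_def)
  finally show ?thesis .
qed

lemma qS_le: "prob (Q L) * S L \<le> 1"
proof -
  have "S L - 1 = (\<Sum>k\<in>{1..L}. prob (F k) * S (L - k))" using conv[of L] S_split[of L] by simp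
  also have "\<dots> \<le> (\<Sum>k\<in>{1..L}. prob (F k) * S L)"
    by (rule sum_mono, rule mult_left_mono[OF S_mono]) auto
  also have "\<dots> = (\<Sum>k\<in>{1..L}. prob (F k)) * S L" by (rule sum_distrib_right[symmetric])
  also have "\<dots> = (1 - prob (Q L)) * S L" by (simp only: sumF)
  finally show ?thesis by (simp add: algebra_simps)
qed

lemma q_lower: "(1 - prob (Q K)) * S L \<le> S (K + L) - 1"
proof -
  have "(1 - prob (Q K)) * S L = (\<Sum>k\<in>{1..K}. prob (F k)) * S L" by (simp only: sumF)
  also have "\<dots> = (\<Sum>k\<in>{1..K}. prob (F k) * S L)" by (rule sum_distrib_right)
  also have "\<dots> \<le> (\<Sum>k\<in>{1..K}. prob (F k) * S (K + L - k))"
    by (rule sum_mono, rule mult_left_mono[OF S_mono]) auto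
  also have "\<dots> \<le> (\<Sum>k\<in>{1..K+L}. prob (F k) * S (K + L - k))"
    by (rule sum_mono2) (use S_nonneg in \<open>auto intro!: mult_nonneg_nonneg\<close>)
  also have "\<dots> = S (K + L) - 1" using conv[of "K+L"] S_split[of "K+L"] by simp
  finally show ?thesis .
qed

lemma harm_upper: "n \<ge> 1 \<Longrightarrow> harm n \<le> 1 + ln (real n)"
proof -
  assume "n \<ge> 1"
  then obtain m where m: "n = Suc m" by (cases n) auto
  have "harm (Suc m) - ln (real (Suc m)) \<le> harm (Suc 0) - ln (real (Suc 0))"
    using decseq_harm_diff_ln unfolding decseq_def by (metis le0)
  then show ?thesis using m by (simp add: harm_def)
qed

lemma a_lower: assumes "\<beta> \<le> 1" "n \<ge> 1" shows "a n \<ge> exp (-1) * (1 / real n)"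
proof -
  have "exp (-1) * (1 / real n) = exp (-1 - ln (real n))"
    using assms by (simp add: exp_diff exp_minus field_simps)
  also have "\<dots> \<le> exp (- harm n)" using harm_upper[OF assms(2)] by simp
  also have "\<dots> \<le> a n" unfolding a_def
  proof -
    have "\<beta> * harm n \<le> 1 * harm n" using assms(1) harm_nonneg[of n] by (rule mult_right_mono)
    then show "exp (- harm n) \<le> exp (- \<beta> * harm n)" by simp
  qed
  finally show ?thesis .
qed

lemma S_lower: assumes "\<beta> \<le> 1" shows "S L \<ge> exp (-1) * ln (real L + 1)"
proof -
  have "exp (-1) * ln (real L + 1) \<le> exp (-1) * harm L"
    using ln_le_harm[of L] by simp
  also have "\<dots> = (\<Sum>n\<in>{1..L}. exp (-1) * (1 / real n))"
    by (simp add: harm_def sum_distrib_left divide_inverse)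
  also have "\<dots> \<le> (\<Sum>n\<in>{1..L}. a n)" by (rule sum_mono) (use a_lower[OF assms] in auto)
  also have "\<dots> \<le> S L" using S_split by simp
  finally show ?thesis .
qed

end



context perc_setup begin

abbreviation "PS \<equiv> {\<omega> \<in> space M. percolates (\<lambda>i. N i \<omega>) (\<lambda>_ _. True)}"

lemma PS_eq: "PS = (\<Inter>n. Q n)"
proof (intro equalityI subsetI)
  fix \<omega> assume "\<omega> \<in> PS" then show "\<omega> \<in> (\<Inter>n. Q n)" using perc_iff by auto
next
  fix \<omega> assume w: "\<omega> \<in> (\<Inter>n. Q n)"
  then have "\<omega> \<in> space M" by (auto simp: Q_def)
  then show "\<omega> \<in> PS" using w perc_iff by auto
qed

lemma PS_le_Q: "prob PS \<le> prob (Q L)"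
  unfolding PS_eq by (rule finite_measure_mono) auto

lemma sub_critical:
  assumes "\<beta> < 1" shows "prob PS = 0"
proof (rule ccontr)
  assume "prob PS \<noteq> 0"
  then have p: "prob PS > 0" using measure_nonneg[of M PS] by linarith
  define L where "L = nat \<lceil>exp (exp 1 / prob PS)\<rceil>"
  have "exp (exp 1 / prob PS) \<le> real L" unfolding L_def by linarith
  then have "exp (exp 1 / prob PS) < real L + 1" by simp
  then have "ln (exp (exp 1 / prob PS)) < ln (real L + 1)"
    by (subst ln_less_cancel_iff) auto
  then have lnL: "exp 1 / prob PS < ln (real L + 1)" by simp
  have "exp 1 / prob PS > 0" using p by simp
  then have lnpos: "ln (real L + 1) > 0" using lnL by linarith
  have "prob PS * S L \<le> prob (Q L) * S L" by (rule mult_right_mono[OF PS_le_Q S_nonneg])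
  then have "prob PS * S L \<le> 1" using qS_le[of L] by linarith
  moreover have "S L \<ge> exp (-1) * ln (real L + 1)" using S_lower assms by simp
  then have "prob PS * (exp (-1) * ln (real L + 1)) \<le> prob PS * S L"
    using p by (intro mult_left_mono) auto
  ultimately have "prob PS * (exp (-1) * ln (real L + 1)) \<le> 1" by linarith
  then have "prob PS * ln (real L + 1) \<le> exp 1"
    by (simp add: exp_minus field_simps)
  moreover have "exp 1 < prob PS * ln (real L + 1)" using lnL p by (simp add: field_simps)
  ultimately show False by simp
qed

lemma a_upper: "a n \<le> real (Suc n) powr (- \<beta>)"
proof -
  have "a n = exp (- \<beta> * harm n)" by (simp add: a_def)
  also have "\<dots> \<le> exp (- \<beta> * ln (real n + 1))"
    using ln_le_harm[of n] beta_pos by simp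
  also have "\<dots> = real (Suc n) powr (- \<beta>)" by (simp add: powr_def add.commute)
  finally show ?thesis .
qed

lemma a_summable: assumes "\<beta> > 1" shows "summable a"
proof -
  have "summable (\<lambda>n. real n powr (- \<beta>))" using assms by (simp add: summable_real_powr_iff)
  then have "summable (\<lambda>n. real (Suc n) powr (- \<beta>))" by (subst summable_Suc_iff)
  then show ?thesis
    by (rule summable_comparison_test') (use a_upper a_pos in \<open>auto simp: less_imp_le\<close>)
qed

lemma super_critical:
  assumes "\<beta> > 1" shows "prob PS > 0"
proof -
  define T where "T = suminf a"
  have sa: "summable a" using a_summable[OF assms] .
  have lim: "S \<longlonglongrightarrow> T" unfolding S_def[abs_def] T_def by (rule summable_LIMSEQ'[OF sa])
  have ST: "S L \<le> T" for L unfolding S_def T_def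
    by (rule sum_le_suminf[OF sa]) (auto intro: less_imp_le[OF a_pos])
  have T1: "T \<ge> 1" using ST[of 0] by (simp add: S_def a0)
  have "\<forall>\<^sub>F L in sequentially. S L > T - 1/2"
    using lim by (rule order_tendstoD) simp
  then obtain L where L: "S L > T - 1/2" by (auto simp: eventually_sequentially)
  define \<delta> where "\<delta> = 1 - (T - 1) / S L"
  have SLpos: "S L > 0" using S_pos[of L] by simp
  have \<delta>pos: "\<delta> > 0" unfolding \<delta>_def using L SLpos by (simp add: field_simps)
  have qK: "prob (Q K) \<ge> \<delta>" for K
  proof -
    have "(1 - prob (Q K)) * S L \<le> T - 1" using q_lower[of K L] ST[of "K + L"] by simp
    then have "1 - prob (Q K) \<le> (T - 1) / S L" using SLpos by (simp add: field_simps)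
    then show ?thesis unfolding \<delta>_def by simp
  qed
  have dec: "decseq Q" unfolding decseq_def Q_def by auto
  have "(\<lambda>n. prob (Q n)) \<longlonglongrightarrow> prob (\<Inter>n. Q n)"
    by (rule finite_Lim_measure_decseq) (use dec in auto)
  then have "\<delta> \<le> prob (\<Inter>n. Q n)" by (rule LIMSEQ_le_const) (use qK in auto)
  then show ?thesis using \<delta>pos PS_eq by simp
qed

end


theorem theorem5:
  fixes M :: "'a measure" and N :: "int \<Rightarrow> 'a \<Rightarrow> nat" and \<beta> :: real
  assumes "prob_space M"
    and "\<beta> > 0"
    and "prob_space.indep_vars M (\<lambda>_. count_space UNIV) N UNIV"
    and "\<And>i n. n \<ge> 1 \<Longrightarrow>
           measure M {\<omega> \<in> space M. N i \<omega> \<ge> n} = 1 - exp (- \<beta> / real n)"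
  shows "(\<beta> < 1 \<longrightarrow> measure M {\<omega> \<in> space M. percolates (\<lambda>i. N i \<omega>) (\<lambda>_ _. True)} = 0)
       \<and> (\<beta> > 1 \<longrightarrow> measure M {\<omega> \<in> space M. percolates (\<lambda>i. N i \<omega>) (\<lambda>_ _. True)} > 0)"
proof -
  interpret perc_setup M N \<beta>
    by (intro perc_setup.intro perc_setup_axioms.intro assms)
  show ?thesis using sub_critical super_critical by auto
qed

end
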